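(* Let $S\subset\mathbb{R}^n$ be a nonempty nearly convex set, let $\varphi\colon\mathbb{R}^n\to\overline{\mathbb{R}}$ be a nearly convex function bounded from below on $S$, and assume $$\mathrm{ri}(\mathrm{dom}\, \varphi)\cap\mathrm{ri}\, S\neq \emptyset.$$ Let $\varepsilon>0$. Then $\bar x\in S$ is an $\varepsilon$-solution of the problem $\inf\{\varphi(x)\mid x\in S\}$ if and only if there exist $\varepsilon_1, \varepsilon_2\geq 0$ with $\varepsilon_1+\varepsilon_2=\varepsilon$ such that $$0\in \partial_{\varepsilon_1}\varphi(\bar x)+ N_{\varepsilon_2}(\bar x; S).$$
   Context: A set $D$ is nearly convex if there is a convex $E$ with $E\subset D\subset\overline{E}$; a function is nearly convex if its epigraph $\{(x,\alpha)\mid\alpha\ge\varphi(x)\}$ is nearly convex; $\mathrm{dom}\,\varphi=\{x\mid\varphi(x)<\infty\}$. $\mathrm{ri}\,D=\{a\in D\mid\exists\delta>0,\ B(a;\delta)\cap\mathrm{aff}\,D\subset D\}$. A point $\bar x\in S$ is an $\varepsilon$-solution of $\inf\{\varphi(x)\mid x\in S\}$ if $\varphi(\bar x)\le\varphi(x)+\varepsilon$ for all $x\in S$. $\partial_\varepsilon\varphi(\bar x)=\{\xi\mid\langle\xi,x-\bar x\rangle-\varepsilon\le\varphi(x)-\varphi(\bar x)\ \forall x\in\mathbb{R}^n\}$ and $N_\varepsilon(\bar x;S)=\{\xi\mid\langle\xi,x-\bar x\rangle\le\varepsilon\ \forall x\in S\}$. *)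

theory Defs
  imports "HOL-Analysis.Analysis" "HOL-Library.Extended_Real"
begin

definition nearly_convex_set :: "'a::real_normed_vector set \<Rightarrow> bool" where
  "nearly_convex_set D \<longleftrightarrow> (\<exists>E. convex E \<and> E \<subseteq> D \<and> D \<subseteq> closure E)"

definition epigraph :: "('a \<Rightarrow> ereal) \<Rightarrow> ('a \<times> real) set" where
  "epigraph \<phi> = {(x, \<alpha>). ereal \<alpha> \<ge> \<phi> x}"

definition nearly_convex_fun :: "('a::real_normed_vector \<Rightarrow> ereal) \<Rightarrow> bool" where
  "nearly_convex_fun \<phi> \<longleftrightarrow> nearly_convex_set (epigraph \<phi>)"

definition edom :: "('a \<Rightarrow> ereal) \<Rightarrow> 'a set" where
  "edom \<phi> = {x. \<phi> x < \<infinity>}"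

definition eps_solution :: "('a \<Rightarrow> ereal) \<Rightarrow> 'a set \<Rightarrow> real \<Rightarrow> 'a \<Rightarrow> bool" where
  "eps_solution \<phi> S \<epsilon> xb \<longleftrightarrow> xb \<in> S \<and> (\<forall>x\<in>S. \<phi> xb \<le> \<phi> x + ereal \<epsilon>)"

definition eps_subdiff :: "real \<Rightarrow> ('a::real_inner \<Rightarrow> ereal) \<Rightarrow> 'a \<Rightarrow> 'a set" where
  "eps_subdiff \<epsilon> \<phi> xb =
     (if \<bar>\<phi> xb\<bar> \<noteq> \<infinity> then {\<xi>. \<forall>x. ereal (inner \<xi> (x - xb) - \<epsilon>) \<le> \<phi> x - \<phi> xb} else {})"

definition eps_normal :: "real \<Rightarrow> 'a::real_inner \<Rightarrow> 'a set \<Rightarrow> 'a set" where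
  "eps_normal \<epsilon> xb S = {\<xi>. \<forall>x\<in>S. inner \<xi> (x - xb) \<le> \<epsilon>}"

end

theory Submission imports Defs begin

lemma nc_ri:
  fixes E D :: "'n::euclidean_space set"
  assumes "convex E" "E \<subseteq> D" "D \<subseteq> closure E"
  shows "rel_interior D = rel_interior E"
proof -
  have h1: "affine hull D = affine hull E"
  proof
    show "affine hull D \<subseteq> affine hull E"
      using hull_mono[OF assms(3), of affine] by simp
    show "affine hull E \<subseteq> affine hull D" using hull_mono[OF assms(2)] .
  qed
  have "rel_interior E \<subseteq> rel_interior D"
    using rel_interior_mono[OF assms(2)] h1 by simp
  moreover have "rel_interior D \<subseteq> rel_interior (closure E)"
    using rel_interior_mono[OF assms(3)] h1 by simp
  ultimately show ?thesis using convex_rel_interior_closure[OF assms(1)] by auto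
qed

lemma strict_sep:
  fixes C1 C2 :: "'n::euclidean_space set"
  assumes "convex C1" "convex C2" "rel_interior C1 = C1" "rel_interior C2 = C2"
    "C1 \<inter> C2 = {}"
  shows "\<exists>a. \<forall>p\<in>C1. \<forall>q\<in>C2. a \<bullet> q < a \<bullet> p"
proof -
  define f where "f = (\<lambda>w::'n \<times> 'n. fst w - snd w)"
  have lf: "linear f" unfolding f_def by (intro linear_compose_sub linear_fst linear_snd)
  define D where "D = f ` (C1 \<times> C2)"
  have cD: "convex D" unfolding D_def by (intro convex_linear_image lf convex_Times assms)
  have "rel_interior D = f ` rel_interior (C1 \<times> C2)"
    unfolding D_def using rel_interior_convex_linear_image[OF lf convex_Times[OF assms(1,2)]] by simp
  also have "\<dots> = D" unfolding D_def using rel_interior_Times[OF assms(1,2)] assms(3,4) by simp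
  finally have rD: "rel_interior D = D" .
  have z: "0 \<notin> D" using assms(5) unfolding D_def f_def by auto
  have "\<exists>a. \<forall>d\<in>D. 0 < a \<bullet> d"
  proof (cases "0 \<in> closure D")
    case True
    have "0 \<notin> rel_interior D" using z rD by simp
    then obtain a where "\<And>y. y \<in> rel_interior D \<Longrightarrow> a \<bullet> 0 < a \<bullet> y"
      using supporting_hyperplane_relative_frontier[OF cD True] by metis
    then show ?thesis using rD by auto
  next
    case False
    then obtain a b where "inner a 0 < b" "\<forall>x\<in>closure D. inner a x > b"
      using separating_hyperplane_closed_point[of "closure D" 0] cD convex_closure by blast
    then have "\<forall>d\<in>D. 0 < a \<bullet> d" using closure_subset[of D] by fastforce
    then show ?thesis by blast
  qed
  then obtain a where "\<forall>d\<in>D. 0 < a \<bullet> d" by blast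
  then show ?thesis unfolding D_def f_def by (auto simp: inner_diff_right)
qed

lemma core:
  fixes \<phi> :: "'n::euclidean_space \<Rightarrow> ereal" and E :: "('n \<times> real) set"
  assumes cE: "convex E" and E1: "E \<subseteq> epigraph \<phi>" and E2: "epigraph \<phi> \<subseteq> closure E"
    and cF: "convex F" and F1: "F \<subseteq> S" and F2: "S \<subseteq> closure F"
    and zd: "z \<in> rel_interior (edom \<phi>)" and zS: "z \<in> rel_interior S"
    and lb: "\<forall>y\<in>S. ereal \<eta> \<le> \<phi> y"
  shows "\<exists>\<xi>. \<forall>x. \<forall>y\<in>S. ereal (\<eta> + \<xi> \<bullet> (x - y)) \<le> \<phi> x"
proof -
  have riS: "rel_interior S = rel_interior F" by (rule nc_ri[OF cF F1 F2])
  have fE1: "fst ` E \<subseteq> edom \<phi>"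
  proof
    fix x assume "x \<in> fst ` E"
    then obtain t where "(x,t) \<in> E" by force
    then have "\<phi> x \<le> ereal t" using E1 by (auto simp: epigraph_def)
    then show "x \<in> edom \<phi>" by (auto simp: edom_def)
  qed
  have fE2: "edom \<phi> \<subseteq> closure (fst ` E)"
  proof
    fix x assume "x \<in> edom \<phi>"
    then have "\<phi> x < \<infinity>" by (simp add: edom_def)
    then obtain t where "\<phi> x \<le> ereal t"
      by (cases "\<phi> x") auto
    then have "(x,t) \<in> closure E" using E2 by (auto simp: epigraph_def)
    then have "x \<in> fst ` closure E" by force
    then show "x \<in> closure (fst ` E)"
      using closure_linear_image_subset[OF linear_fst, of E] by blast
  qed
  have cfE: "convex (fst ` E)" by (intro convex_linear_image linear_fst cE)
  have rid: "rel_interior (edom \<phi>) = rel_interior (fst ` E)" by (rule nc_ri[OF cfE fE1 fE2])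
  define C1 where "C1 = rel_interior E"
  define C2 where "C2 = rel_interior (F \<times> {..<\<eta>})"
  have cC1: "convex C1" unfolding C1_def by (rule convex_rel_interior[OF cE])
  have cC2: "convex C2" unfolding C2_def by (intro convex_rel_interior convex_Times cF) simp
  have rC1: "rel_interior C1 = C1" unfolding C1_def by (rule rel_interior_rel_interior[OF cE])
  have rC2: "rel_interior C2 = C2" unfolding C2_def by (intro rel_interior_rel_interior convex_Times cF) simp
  have C2eq: "C2 = rel_interior F \<times> {..<\<eta>}"
    unfolding C2_def using rel_interior_Times[OF cF, of "{..<\<eta>}"] by (simp add: rel_interior_open)
  have disj: "C1 \<inter> C2 = {}"
  proof (rule ccontr)
    assume "C1 \<inter> C2 \<noteq> {}"
    then obtain x t where xt: "(x,t) \<in> C1" "(x,t) \<in> C2" by auto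
    then have "(x,t) \<in> E" unfolding C1_def using rel_interior_subset by blast
    then have "\<phi> x \<le> ereal t" using E1 by (auto simp: epigraph_def)
    moreover have "x \<in> S" "t < \<eta>" using xt(2) C2eq rel_interior_subset F1 by auto
    ultimately show False using lb by (metis ereal_less_eq(3) linorder_not_le order_trans)
  qed
  obtain a where a: "\<forall>p\<in>C1. \<forall>q\<in>C2. a \<bullet> q < a \<bullet> p"
    using strict_sep[OF cC1 cC2 rC1 rC2 disj] by blast
  obtain \<xi>0 \<mu> where a_eq: "a = (\<xi>0, \<mu>)" by (cases a)
  have strict: "\<xi>0 \<bullet> y + \<mu> * s < \<xi>0 \<bullet> x + \<mu> * t"
    if "(x,t) \<in> C1" "y \<in> rel_interior F" "s < \<eta>" for x t y s
    using a that C2eq a_eq by force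
  have zF: "z \<in> rel_interior F" using zS riS by simp
  have zE: "z \<in> rel_interior (fst ` E)" using zd rid by simp
  define g where "g = (\<lambda>y. {t. (y,t) \<in> E})"
  have "fst ` E = {y. g y \<noteq> {}}" unfolding g_def by force
  have gz: "g z \<noteq> {}" using zE rel_interior_subset unfolding g_def by force
  have cg: "convex (g z)"
    unfolding convex_def g_def
  proof (intro ballI allI impI, simp)
    fix x y u v :: real assume h: "(z,x)\<in>E" "(z,y)\<in>E" "0\<le>u" "0\<le>v" "u+v=1"
    then have "u *\<^sub>R (z,x) + v *\<^sub>R (z,y) \<in> E" using cE convexD by blast
    moreover have "u *\<^sub>R (z,x) + v *\<^sub>R (z,y) = (z, u * x + v * y)"
      using h(5) by (simp flip: scaleR_add_left)
    ultimately show "(z, u * x + v * y) \<in> E" by simp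
  qed
  obtain t0 where t0: "t0 \<in> rel_interior (g z)" using gz rel_interior_eq_empty[OF cg] by blast
  have zt0: "(z,t0) \<in> C1" unfolding C1_def
    using rel_interior_projection[OF cE g_def] zE t0 \<open>fst ` E = {y. g y \<noteq> {}}\<close> by simp
  have mu: "\<mu> > 0"
  proof (rule ccontr)
    assume "\<not> \<mu> > 0"
    then consider "\<mu> = 0" | "\<mu> < 0" by linarith
    then show False
    proof cases
      case 1
      then show False using strict[OF zt0 zF, of "\<eta> - 1"] by simp
    next
      case 2
      define s where "s = min (\<eta> - 1) ((\<xi>0 \<bullet> z + \<mu> * t0 - \<xi>0 \<bullet> z) / \<mu>)"
      have "s < \<eta>" unfolding s_def by simp
      have "s \<le> (\<xi>0 \<bullet> z + \<mu> * t0 - \<xi>0 \<bullet> z) / \<mu>" unfolding s_def by simp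
      then have "\<mu> * s \<ge> \<mu> * ((\<xi>0 \<bullet> z + \<mu> * t0 - \<xi>0 \<bullet> z) / \<mu>)"
        using 2 by (simp add: mult_le_cancel_left)
      then have "\<mu> * s \<ge> \<mu> * t0" using 2 by simp
      then show False using strict[OF zt0 zF \<open>s < \<eta>\<close>] by simp
    qed
  qed
  define H where "H = {w :: ('n \<times> real) \<times> ('n \<times> real). a \<bullet> snd w \<le> a \<bullet> fst w}"
  have clH: "closed H" unfolding H_def
    by (intro closed_Collect_le continuous_intros)
  have "C1 \<times> C2 \<subseteq> H" using a unfolding H_def by fastforce
  then have "closure (C1 \<times> C2) \<subseteq> H" using clH closure_minimal by blast
  then have clos: "closure C1 \<times> closure C2 \<subseteq> H" by (simp add: closure_Times)
  have cl1: "closure C1 = closure E" unfolding C1_def by (rule convex_closure_rel_interior[OF cE])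
  have cl2: "closure C2 = closure F \<times> {..\<eta>}"
    unfolding C2eq closure_Times using convex_closure_rel_interior[OF cF] by simp
  have weak: "\<xi>0 \<bullet> y + \<mu> * \<eta> \<le> \<xi>0 \<bullet> x + \<mu> * t"
    if "\<phi> x \<le> ereal t" "y \<in> S" for x y t
  proof -
    have "(x,t) \<in> closure C1" using that(1) E2 cl1 by (auto simp: epigraph_def)
    moreover have "(y,\<eta>) \<in> closure C2" using that(2) F2 cl2 by auto
    ultimately have "((x,t),(y,\<eta>)) \<in> H" using clos by blast
    then show ?thesis unfolding H_def a_eq by simp
  qed
  define \<xi> where "\<xi> = - (1/\<mu>) *\<^sub>R \<xi>0"
  have key: "\<eta> + \<xi> \<bullet> (x - y) \<le> t" if "\<phi> x \<le> ereal t" "y \<in> S" for x y t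
  proof -
    have "\<xi>0 \<bullet> y + \<mu> * \<eta> \<le> \<xi>0 \<bullet> x + \<mu> * t" by (rule weak[OF that])
    then have "(\<xi>0 \<bullet> y - \<xi>0 \<bullet> x) / \<mu> + \<eta> \<le> t" using mu
      by (simp add: field_simps)
    then show ?thesis unfolding \<xi>_def using mu by (simp add: inner_diff_right field_simps)
  qed
  show ?thesis
  proof (intro exI allI ballI)
    fix x y assume y: "y \<in> S"
    show "ereal (\<eta> + \<xi> \<bullet> (x - y)) \<le> \<phi> x"
    proof (cases "\<phi> x")
      case (real r)
      then show ?thesis using key[of x r y] y by simp
    next
      case PInf then show ?thesis by simp
    next
      case MInf
      then have "\<eta> + \<xi> \<bullet> (x - y) \<le> \<eta> + \<xi> \<bullet> (x - y) - 1"
        using key[of x "\<eta> + \<xi> \<bullet> (x - y) - 1" y] y by simp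
      then show ?thesis by simp
    qed
  qed
qed

theorem mainTheorem8:
  fixes S :: "'a::euclidean_space set" and \<phi> :: "'a \<Rightarrow> ereal" and \<epsilon> :: real and xb :: 'a
  assumes "S \<noteq> {}" and "nearly_convex_set S"
    and "nearly_convex_fun \<phi>"
    and "\<exists>m::real. \<forall>x\<in>S. ereal m \<le> \<phi> x"
    and "rel_interior (edom \<phi>) \<inter> rel_interior S \<noteq> {}"
    and "\<epsilon> > 0" and "xb \<in> S"
  shows "eps_solution \<phi> S \<epsilon> xb \<longleftrightarrow>
    (\<exists>\<epsilon>1 \<epsilon>2. \<epsilon>1 \<ge> 0 \<and> \<epsilon>2 \<ge> 0 \<and> \<epsilon>1 + \<epsilon>2 = \<epsilon> \<and>
       0 \<in> {a + b | a b. a \<in> eps_subdiff \<epsilon>1 \<phi> xb \<and> b \<in> eps_normal \<epsilon>2 xb S})"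
proof -
  obtain E where cE: "convex E" and E1: "E \<subseteq> epigraph \<phi>" and E2: "epigraph \<phi> \<subseteq> closure E"
    using assms(3) unfolding nearly_convex_fun_def nearly_convex_set_def by blast
  obtain F where cF: "convex F" and F1: "F \<subseteq> S" and F2: "S \<subseteq> closure F"
    using assms(2) unfolding nearly_convex_set_def by blast
  obtain z where zd: "z \<in> rel_interior (edom \<phi>)" and zS: "z \<in> rel_interior S"
    using assms(5) by blast
  have zdom: "\<phi> z < \<infinity>" using zd rel_interior_subset by (auto simp: edom_def)
  have zinS: "z \<in> S" using zS rel_interior_subset by blast
  show ?thesis
  proof
    assume sol: "eps_solution \<phi> S \<epsilon> xb"
    then have solx: "\<forall>x\<in>S. \<phi> xb \<le> \<phi> x + ereal \<epsilon>" by (simp add: eps_solution_def)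
    obtain m where m: "\<forall>x\<in>S. ereal m \<le> \<phi> x" using assms(4) by blast
    have "\<phi> xb \<le> \<phi> z + ereal \<epsilon>" using solx zinS by blast
    moreover have "ereal m \<le> \<phi> xb" using m assms(7) by blast
    ultimately obtain r where r: "\<phi> xb = ereal r" using zdom
      by (cases "\<phi> xb"; cases "\<phi> z") auto
    define \<eta> where "\<eta> = r - \<epsilon>"
    have lb: "\<forall>y\<in>S. ereal \<eta> \<le> \<phi> y"
    proof
      fix y assume "y \<in> S"
      then have "ereal r \<le> \<phi> y + ereal \<epsilon>" using solx r by simp
      then show "ereal \<eta> \<le> \<phi> y" unfolding \<eta>_def by (cases "\<phi> y") auto
    qed
    obtain \<xi> where xi: "\<forall>x. \<forall>y\<in>S. ereal (\<eta> + \<xi> \<bullet> (x - y)) \<le> \<phi> x"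
      using core[OF cE E1 E2 cF F1 F2 zd zS lb] by blast
    define \<beta> where "\<beta> = Inf ((\<lambda>y. \<xi> \<bullet> y) ` S)"
    have low: "\<eta> - r + \<xi> \<bullet> xb \<le> \<xi> \<bullet> y" if "y \<in> S" for y
      using xi[rule_format, OF that, of xb] r by (simp add: inner_diff_right)
    have bdd: "bdd_below ((\<lambda>y. \<xi> \<bullet> y) ` S)" using low by (intro bdd_belowI2) 
    have b1: "\<beta> \<le> \<xi> \<bullet> y" if "y \<in> S" for y
      unfolding \<beta>_def using bdd that by (intro cInf_lower) auto
    have b2: "\<eta> - r + \<xi> \<bullet> xb \<le> \<beta>"
      unfolding \<beta>_def using assms(1) low by (intro cInf_greatest) auto
    have minor: "ereal (\<xi> \<bullet> x + \<eta> - \<beta>) \<le> \<phi> x" for x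
    proof (cases "\<phi> x")
      case (real s)
      have "\<eta> + \<xi> \<bullet> x - s \<le> \<beta>"
        unfolding \<beta>_def using assms(1)
      proof (intro cInf_greatest)
        fix w assume "w \<in> (\<lambda>y. \<xi> \<bullet> y) ` S"
        then obtain y where "y \<in> S" "w = \<xi> \<bullet> y" by blast
        then show "\<eta> + \<xi> \<bullet> x - s \<le> w"
          using xi[rule_format, OF \<open>y \<in> S\<close>, of x] real by (simp add: inner_diff_right)
      qed auto
      then show ?thesis using real by simp
    next
      case PInf then show ?thesis by simp
    next
      case MInf then show ?thesis using xi[rule_format, OF assms(7), of x] by simp
    qed
    define \<epsilon>1 where "\<epsilon>1 = r - \<xi> \<bullet> xb - \<eta> + \<beta>"
    define \<epsilon>2 where "\<epsilon>2 = \<xi> \<bullet> xb - \<beta>"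
    have "\<xi> \<in> eps_subdiff \<epsilon>1 \<phi> xb"
      unfolding eps_subdiff_def
    proof (simp add: r, intro allI)
      fix x
      show "ereal (\<xi> \<bullet> (x - xb) - \<epsilon>1) \<le> \<phi> x - ereal r"
        using minor[of x] unfolding \<epsilon>1_def
        by (cases "\<phi> x") (auto simp: inner_diff_right)
    qed
    moreover have "- \<xi> \<in> eps_normal \<epsilon>2 xb S"
      unfolding eps_normal_def \<epsilon>2_def using b1 by (auto simp: inner_diff_right)
    moreover have "\<epsilon>1 \<ge> 0" "\<epsilon>2 \<ge> 0" "\<epsilon>1 + \<epsilon>2 = \<epsilon>"
      using b1[OF assms(7)] b2 unfolding \<epsilon>1_def \<epsilon>2_def \<eta>_def by auto
    ultimately show "\<exists>\<epsilon>1 \<epsilon>2. \<epsilon>1 \<ge> 0 \<and> \<epsilon>2 \<ge> 0 \<and> \<epsilon>1 + \<epsilon>2 = \<epsilon> \<and>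
       0 \<in> {a + b | a b. a \<in> eps_subdiff \<epsilon>1 \<phi> xb \<and> b \<in> eps_normal \<epsilon>2 xb S}"
      by (intro exI[of _ \<epsilon>1] exI[of _ \<epsilon>2]) force
  next
    assume "\<exists>\<epsilon>1 \<epsilon>2. \<epsilon>1 \<ge> 0 \<and> \<epsilon>2 \<ge> 0 \<and> \<epsilon>1 + \<epsilon>2 = \<epsilon> \<and>
       0 \<in> {a + b | a b. a \<in> eps_subdiff \<epsilon>1 \<phi> xb \<and> b \<in> eps_normal \<epsilon>2 xb S}"
    then obtain \<epsilon>1 \<epsilon>2 a b where e: "\<epsilon>1 + \<epsilon>2 = \<epsilon>" and ab: "0 = a + b"
      and a: "a \<in> eps_subdiff \<epsilon>1 \<phi> xb" and b: "b \<in> eps_normal \<epsilon>2 xb S" by blast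
    have bm: "b = - a" using ab by (simp add: eq_neg_iff_add_eq_0 add.commute)
    have fin: "\<bar>\<phi> xb\<bar> \<noteq> \<infinity>" using a by (simp add: eps_subdiff_def split: if_splits)
    then obtain r where r: "\<phi> xb = ereal r" by (cases "\<phi> xb") auto
    have asub: "\<forall>x. ereal (a \<bullet> (x - xb) - \<epsilon>1) \<le> \<phi> x - ereal r"
      using a r by (simp add: eps_subdiff_def)
    have bn: "\<forall>x\<in>S. - (a \<bullet> (x - xb)) \<le> \<epsilon>2" using b bm by (simp add: eps_normal_def)
    show "eps_solution \<phi> S \<epsilon> xb"
      unfolding eps_solution_def
    proof (intro conjI ballI)
      show "xb \<in> S" by (rule assms(7))
      fix x assume x: "x \<in> S"
      show "\<phi> xb \<le> \<phi> x + ereal \<epsilon>"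
        using asub[rule_format, of x] bn[rule_format, OF x] r e
        by (cases "\<phi> x") auto
    qed
  qed
qed

end
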